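(* Let $m,n$ be indeterminates and work in the ring of formal power series $\mathbb{Q}[m,n][[x]]$. Let $$f(x)=\sum_{k\ge 0}(-1)^k\, m(m+n)(m+2n)\cdots(m+(k-1)n)\,x^k = 1-mx+m(m+n)x^2-m(m+n)(m+2n)x^3+\cdots$$ (the empty product for $k=0$ being $1$). Define $c_{2j-1}=(m+(j-1)n)x$ and $c_{2j}=jn\,x$ for $j\ge 1$, so that $c_1=mx,\ c_2=nx,\ c_3=(m+n)x,\ c_4=2nx,\ c_5=(m+2n)x,\dots$, and for $N\ge 1$ let $$K_N=\cfrac{1}{1+\cfrac{c_1}{1+\cfrac{c_2}{1+\cdots+\cfrac{c_N}{1}}}}.$$ Then each $K_N$ is a rational function in $x$ whose expansion is a power series in $\mathbb{Q}[m,n][[x]]$, and $K_N\equiv f(x)\pmod{x^{N+1}}$. Consequently $K_N\to f$ in the $x$-adic topology, i.e. $f$ equals the infinite continued fraction $$f=\cfrac{1}{1+\cfrac{mx}{1+\cfrac{nx}{1+\cfrac{(m+n)x}{1+\cfrac{2nx}{1+\cfrac{(m+2n)x}{1+\cfrac{3nx}{1+\cdots}}}}}}}$$ in this formal sense.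
   Context: The series $f$ is divergent for every nonzero numerical $x$ (unless $m=0$), so the identity is understood as an identity of formal power series: the finite truncations $K_N$ of the continued fraction, expanded as power series in $x$, agree with $f$ up to and including the coefficient of $x^N$. *)

theory Defs
  imports "HOL-Computational_Algebra.Formal_Power_Series"
          "HOL-Computational_Algebra.Polynomial"
          "HOL-Computational_Algebra.Fraction_Field"
begin

text \<open>The coefficient ring Q[m,n] is represented as (Q[m])[n] = rat poly poly.
  The indeterminate m is the inner variable (a constant w.r.t. the outer variable),
  n is the outer variable.\<close>

type_synonym qmn = "rat poly poly"

definition mvar :: qmn where "mvar = [:[:0, 1:]:]"
definition nvar :: qmn where "nvar = [:0, 1:]"

definition f_ser :: "qmn fps" where
  "f_ser = Abs_fps (\<lambda>k. (-1) ^ k * (\<Prod>i<k. mvar + of_nat i * nvar))"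

text \<open>The coefficients: c_(2j-1) = m+(j-1)n, c_(2j) = j n (the factor x is added below).\<close>
definition cf_c :: "nat \<Rightarrow> qmn" where
  "cf_c j = (if odd j then mvar + of_nat ((j - 1) div 2) * nvar else of_nat (j div 2) * nvar)"

text \<open>Continued fractions are computed in the power series ring over the fraction
  field of Q[m,n] (so that K_N, a rational function in x, is represented by its expansion).
  cf_den [a1,...,ar] = 1 + a1 x/(1 + a2 x/(... (1 + ar x/1))).\<close>
fun cf_den :: "qmn list \<Rightarrow> qmn fract fps" where
  "cf_den [] = 1"
| "cf_den (a # as) = 1 + fps_const (Fract a 1) * fps_X * inverse (cf_den as)"

definition K :: "nat \<Rightarrow> qmn fract fps" where
  "K N = inverse (cf_den (map cf_c [1..<N+1]))"

definition fps_to_fract :: "qmn fps \<Rightarrow> qmn fract fps" where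
  "fps_to_fract g = Abs_fps (\<lambda>k. Fract (fps_nth g k) 1)"

end

theory Submission imports Defs begin

lemma Fract_add1: "Fract (a+b) 1 = Fract a 1 + Fract (b::qmn) 1" by simp
lemma Fract_mult1: "Fract (a*b) 1 = Fract a 1 * Fract (b::qmn) 1" by simp
lemma Fract_sum1: "Fract (sum f S) 1 = (\<Sum>i\<in>S. Fract (f i :: qmn) 1)"
  by (induction S rule: infinite_finite_induct) (auto simp: fract_collapse Fract_add1)

lemma ftf_nth[simp]: "fps_nth (fps_to_fract g) k = Fract (fps_nth g k) 1"
  by (simp add: fps_to_fract_def)

lemma ftf_mult: "fps_to_fract (a * b) = fps_to_fract a * fps_to_fract b"
  by (rule fps_ext) (simp add: fps_mult_nth Fract_sum1)
lemma ftf_add: "fps_to_fract (a + b) = fps_to_fract a + fps_to_fract b"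
  by (rule fps_ext) simp
lemma ftf_diff: "fps_to_fract (a - b) = fps_to_fract a - fps_to_fract b"
  by (rule fps_ext) simp
lemma ftf_1: "fps_to_fract 1 = 1"
  by (rule fps_ext) (simp add: fract_collapse)
lemma ftf_X: "fps_to_fract fps_X = fps_X"
  by (rule fps_ext) (simp add: fract_collapse fps_X_def)
lemma ftf_const: "fps_to_fract (fps_const a) = fps_const (Fract a 1)"
  by (rule fps_ext) (simp add: fract_collapse)

lemma ftf_inverse:
  assumes "fps_nth d 0 = 1"
  shows "inverse (fps_to_fract d) = fps_to_fract (fps_right_inverse d 1)"
proof (rule fps_inverse_unique)
  show "fps_to_fract d * fps_to_fract (fps_right_inverse d 1) = 1"
    by (simp add: ftf_mult[symmetric] fps_right_inverse assms ftf_1)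
qed

lemma cf_den_int: "\<exists>d. cf_den as = fps_to_fract d \<and> fps_nth d 0 = 1"
proof (induction as)
  case Nil then show ?case by (intro exI[of _ 1]) (simp add: ftf_1)
next
  case (Cons a as)
  then obtain d where d: "cf_den as = fps_to_fract d" "fps_nth d 0 = 1" by blast
  show ?case
    by (intro exI[of _ "1 + fps_const a * fps_X * fps_right_inverse d 1"])
       (simp add: d ftf_inverse ftf_add ftf_mult ftf_1 ftf_X ftf_const)
qed

lemma cf_den_0[simp]: "fps_nth (cf_den as) 0 = 1"
  by (cases as) auto

lemma ftf_inj: "fps_nth (fps_to_fract a) k = fps_nth (fps_to_fract b) k \<Longrightarrow> fps_nth a k = fps_nth b k"
  by (simp add: eq_fract)

definition PP :: "nat \<Rightarrow> nat \<Rightarrow> qmn" where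
  "PP j k = (\<Prod>i<k. mvar + of_nat (j+i) * nvar)"
definition BB :: "nat \<Rightarrow> nat \<Rightarrow> nat" where
  "BB b k = (if b = 0 then (if k = 0 then 1 else 0) else (b + k - 1) choose k)"
definition hh :: "nat \<Rightarrow> qmn fps" where
  "hh t = Abs_fps (\<lambda>k. (-1)^k * PP (t div 2) k * of_nat (BB ((t+1) div 2) k))"

lemma PP_Suc: "PP j (Suc s) = (mvar + of_nat j * nvar) * PP (Suc j) s"
  unfolding PP_def by (subst prod.lessThan_Suc_shift) simp
lemma PP_Suc2: "PP j (Suc s) = PP j s * (mvar + of_nat (j+s) * nvar)"
  unfolding PP_def by simp

lemma BB_pascal: "BB (Suc j) (Suc s) = BB j (Suc s) + BB (Suc j) s"
  by (cases j) (auto simp: BB_def)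

lemma BB_ratio: "Suc s * BB (Suc j) (Suc s) = Suc j * BB (Suc (Suc j)) s"
  unfolding BB_def apply simp
  by (metis Suc_times_binomial_add add.commute binomial_Suc_Suc mult_Suc)

lemma aux_id:
  fixes m n sg Q b1 b2 :: "'a::comm_ring_1"
  assumes "(1 + of_nat s) * b1 = (1 + of_nat j) * b2"
  shows "- (sg * ((m + of_nat j * n) * Q) * b1) = ((1 + of_nat j) * n) * (sg * Q * b2)
          - sg * (Q * (m + (1 + (of_nat j + of_nat s)) * n)) * b1"
proof -
  have "((1 + of_nat j) * n) * (sg * Q * b2) = sg * Q * n * ((1 + of_nat j) * b2)"
    by (simp add: algebra_simps)
  also have "\<dots> = sg * Q * n * ((1 + of_nat s) * b1)" using assms by simp
  finally show ?thesis by (simp add: algebra_simps)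
qed

lemma hh0: "hh 0 = 1"
  by (rule fps_ext) (simp add: hh_def BB_def PP_def)
lemma hh1: "hh 1 = f_ser"
  by (rule fps_ext) (simp add: hh_def BB_def PP_def f_ser_def)
lemma hh_nth0: "fps_nth (hh t) 0 = 1"
  by (simp add: hh_def BB_def PP_def)

lemma cX_nth0: "fps_nth (fps_const (c::'a::comm_ring_1) * fps_X * G) 0 = 0"
  by (simp add: mult.assoc)
lemma cX_nthS: "fps_nth (fps_const (c::'a::comm_ring_1) * fps_X * G) (Suc s) = c * fps_nth G s"
  by (simp add: mult.assoc)
lemmas cX_nth = cX_nth0 cX_nthS

lemma hh_rec: "hh t = hh (Suc t) + fps_const (cf_c (Suc t)) * fps_X * hh (Suc (Suc t))"
proof (rule fps_ext)
  fix k
  show "fps_nth (hh t) k = fps_nth (hh (Suc t) + fps_const (cf_c (Suc t)) * fps_X * hh (Suc (Suc t))) k"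
  proof (cases k)
    case 0 then show ?thesis by (simp add: cX_nth hh_nth0)
  next
    case (Suc s)
    obtain j where "t = 2*j \<or> t = 2*j+1" by (metis odd_two_times_div_two_succ even_two_times_div_two)
    then show ?thesis
    proof
      assume t: "t = 2*j"
      have cc: "cf_c (Suc t) = mvar + of_nat j * nvar" using t by (simp add: cf_c_def)
      have d1: "Suc t div 2 = j" "(Suc t + 1) div 2 = Suc j" "Suc (Suc t) div 2 = Suc j" "(t+1) div 2 = j"
        "(Suc (Suc t) + 1) div 2 = Suc j" using t by auto
      have B: "(of_nat (BB (Suc j) (Suc s)) :: qmn) = of_nat (BB j (Suc s)) + of_nat (BB (Suc j) s)"
        by (simp add: BB_pascal)
      show ?thesis using Suc
        apply (simp add: cX_nth hh_def d1 cc t PP_Suc)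
        apply (simp add: B algebra_simps cf_c_def)
        done
    next
      assume t: "t = 2*j+1"
      have cc: "cf_c (Suc t) = of_nat (Suc j) * nvar" using t by (simp add: cf_c_def)
      have d1: "t div 2 = j" "Suc t div 2 = Suc j" "(t+1) div 2 = Suc j" "(Suc t + 1) div 2 = Suc j" "Suc (Suc t) div 2 = Suc j"
        "(Suc (Suc t) + 1) div 2 = Suc (Suc j)" using t by auto
      have B: "(of_nat (Suc s) * of_nat (BB (Suc j) (Suc s)) :: qmn) = of_nat (Suc j) * of_nat (BB (Suc (Suc j)) s)"
        by (metis BB_ratio of_nat_mult)
      show ?thesis using Suc
        apply (simp add: cX_nth hh_def d1 cc t PP_Suc[of j s] PP_Suc2[of "Suc j" s])
        apply (simp add: cf_c_def)
        apply (rule aux_id)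
        using B by simp
    qed
  qed
qed

definition HH :: "nat \<Rightarrow> qmn fract fps" where "HH t = fps_to_fract (hh t)"
definition CC :: "nat \<Rightarrow> qmn fract fps" where "CC k = fps_const (Fract (cf_c k) 1)"
definition EE :: "nat \<Rightarrow> qmn fract fps" where "EE t = HH t * inverse (HH (Suc t))"

lemma HH_rec: "HH t = HH (Suc t) + CC (Suc t) * fps_X * HH (Suc (Suc t))"
  unfolding HH_def CC_def
  by (subst hh_rec) (simp add: ftf_add ftf_mult ftf_const ftf_X)

lemma HH_nth0[simp]: "fps_nth (HH t) 0 = 1"
  by (simp add: HH_def hh_nth0 fract_collapse)

lemma EE_nth0[simp]: "fps_nth (EE t) 0 = 1"
  by (simp add: EE_def)

lemma inv_diff:
  fixes a b :: "'a::field fps"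
  assumes "fps_nth a 0 \<noteq> 0" "fps_nth b 0 \<noteq> 0"
  shows "inverse a - inverse b = inverse a * inverse b * (b - a)"
proof -
  have "inverse a * inverse b * (b - a) = inverse a * (inverse b * b) - inverse b * (inverse a * a)"
    by (simp add: algebra_simps)
  also have "\<dots> = inverse a - inverse b" using assms by (simp add: inverse_mult_eq_1)
  finally show ?thesis by simp
qed

lemma EE_rec: "EE t = 1 + CC (Suc t) * fps_X * inverse (EE (Suc t))"
proof -
  have i: "inverse (EE (Suc t)) = inverse (HH (Suc t)) * HH (Suc (Suc t))"
    unfolding EE_def by (simp add: fps_inverse_mult)
  have "1 + CC (Suc t) * fps_X * inverse (EE (Suc t))
      = inverse (HH (Suc t)) * (HH (Suc t) + CC (Suc t) * fps_X * HH (Suc (Suc t)))"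
    by (simp add: i algebra_simps inverse_mult_eq_1 inverse_mult_eq_1')
  also have "\<dots> = EE t" unfolding HH_rec[of t, symmetric] EE_def by (rule mult.commute)
  finally show ?thesis by simp
qed

lemma cong_EE: "\<exists>q. EE t - cf_den (map cf_c [Suc t..<Suc t + d]) = fps_X ^ Suc d * q"
proof (induction d arbitrary: t)
  case 0
  show ?case
    by (intro exI[of _ "CC (Suc t) * inverse (EE (Suc t))"]) (subst EE_rec, simp add: algebra_simps)
next
  case (Suc d)
  obtain q where q: "EE (Suc t) - cf_den (map cf_c [Suc (Suc t)..<Suc (Suc t) + d]) = fps_X ^ Suc d * q"
    using Suc by blast
  define D' where "D' = cf_den (map cf_c [Suc (Suc t)..<Suc (Suc t) + d])"
  have L: "[Suc t..<Suc t + Suc d] = Suc t # [Suc (Suc t)..<Suc (Suc t) + d]"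
    by (simp add: upt_conv_Cons)
  have "EE t - cf_den (map cf_c [Suc t..<Suc t + Suc d])
      = CC (Suc t) * fps_X * (inverse (EE (Suc t)) - inverse D')"
  proof -
    have c: "cf_den (map cf_c [Suc t..<Suc t + Suc d]) = 1 + CC (Suc t) * fps_X * inverse D'"
      by (simp only: L list.map cf_den.simps D'_def CC_def)
    show ?thesis unfolding c by (subst EE_rec[of t]) (simp only: right_diff_distrib add_diff_cancel_left)
  qed
  also have "\<dots> = CC (Suc t) * fps_X * (inverse (EE (Suc t)) * inverse D' * (D' - EE (Suc t)))"
    by (subst inv_diff) (simp_all add: D'_def)
  also have "\<dots> = CC (Suc t) * fps_X * (inverse (EE (Suc t)) * inverse D' * (- (fps_X ^ Suc d * q)))"
  proof -
    have dq: "D' - EE (Suc t) = - (fps_X ^ Suc d * q)"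
      unfolding D'_def using q by (metis minus_diff_eq)
    show ?thesis by (simp only: dq)
  qed
  also have "\<dots> = fps_X ^ Suc (Suc d) * (- (CC (Suc t) * inverse (EE (Suc t)) * inverse D' * q))"
    by (simp only: power_Suc mult_minus_right mult_minus_left minus_minus mult_ac)
  finally show ?case by blast
qed

lemma K_cong: "\<exists>q. K N - fps_to_fract f_ser = fps_X ^ Suc N * q"
proof -
  obtain q where q: "EE 0 - cf_den (map cf_c [Suc 0..<Suc 0 + N]) = fps_X ^ Suc N * q"
    using cong_EE by blast
  define D where "D = cf_den (map cf_c [Suc 0..<Suc 0 + N])"
  have KD: "K N = inverse D" by (simp add: K_def D_def)
  have F: "fps_to_fract f_ser = inverse (EE 0)"
  proof -
    have "fps_to_fract f_ser = HH 1" unfolding HH_def hh1 ..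
    moreover have "EE 0 = inverse (HH 1)" by (simp add: EE_def HH_def hh0 ftf_1)
    ultimately show ?thesis by simp
  qed
  have "K N - fps_to_fract f_ser = inverse D * inverse (EE 0) * (EE 0 - D)"
    by (simp add: KD F inv_diff D_def)
  also have "\<dots> = fps_X ^ Suc N * (inverse D * inverse (EE 0) * q)"
    using q by (simp add: D_def algebra_simps)
  finally show ?thesis by blast
qed

lemma K_nth: "k \<le> N \<Longrightarrow> fps_nth (K N) k = fps_nth (fps_to_fract f_ser) k"
proof -
  assume k: "k \<le> N"
  obtain q where q: "K N - fps_to_fract f_ser = fps_X ^ Suc N * q" using K_cong by blast
  have "fps_nth (K N - fps_to_fract f_ser) k = 0" using k by (simp only: q fps_X_power_mult_nth) simp
  then show ?thesis by simp
qed

theorem mainTheorem1: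
  shows "(\<forall>N\<ge>1. (\<exists>g :: qmn fps. K N = fps_to_fract g \<and> (\<forall>k\<le>N. fps_nth g k = fps_nth f_ser k)))
         \<and> (K \<longlonglongrightarrow> fps_to_fract f_ser)"
proof
  show "\<forall>N\<ge>1. (\<exists>g :: qmn fps. K N = fps_to_fract g \<and> (\<forall>k\<le>N. fps_nth g k = fps_nth f_ser k))"
  proof (intro allI impI)
    fix N :: nat
    obtain d where d: "cf_den (map cf_c [1..<N+1]) = fps_to_fract d" "fps_nth d 0 = 1"
      using cf_den_int by blast
    have KN: "K N = fps_to_fract (fps_right_inverse d 1)"
      unfolding K_def d(1) by (rule ftf_inverse[OF d(2)])
    show "\<exists>g :: qmn fps. K N = fps_to_fract g \<and> (\<forall>k\<le>N. fps_nth g k = fps_nth f_ser k)"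
      using K_nth KN by (intro exI[of _ "fps_right_inverse d 1"]) (metis ftf_inj)
  qed
  show "K \<longlonglongrightarrow> fps_to_fract f_ser"
  proof (rule tendsto_fpsI)
    fix n
    show "\<forall>\<^sub>F x in sequentially. fps_nth (K x) n = fps_nth (fps_to_fract f_ser) n"
      using K_nth by (intro eventually_sequentiallyI[of n]) auto
  qed
qed

end
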